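(* Let $0\le a\le b\le1$, and in $l_\infty^2$ let $H_1=\{(\xi_1,\xi_2):\xi_2\ge a\xi_1\}$ and $H_2=\{(\xi_1,\xi_2):\xi_2\le b\xi_1\}$ with the restricted metrics. Let $X$ be the gluing of $H_1$ and $H_2$ along $\mathbb{R}$ via the isometries $\xi\mapsto(\xi,a\xi)\in H_1$ and $\xi\mapsto(\xi,b\xi)\in H_2$ (i.e. identifying $(\xi,a\xi)$ with $(\xi,b\xi)$). Then $X$ is hyperconvex if and only if $a=b$.
   Context: $l_\infty^2$ is $\mathbb{R}^2$ with the metric $d((\xi_1,\xi_2),(\eta_1,\eta_2))=\max(|\xi_1-\eta_1|,|\xi_2-\eta_2|)$. A metric space is hyperconvex if every collection of closed balls $\{B(x_i,r_i)\}$ with $d(x_i,x_j)\le r_i+r_j$ has non-empty intersection. The gluing of $X_1,X_2$ along $A$ via isometric embeddings $\varphi_k\colon A\to X_k$ with closed images is $X_1\sqcup X_2/(\varphi_1(a)\sim\varphi_2(a))$ with metric $d_k$ on $X_k$ and $d(x,y)=\inf_{a\in A}\{d_1(x,\varphi_1(a))+d_2(\varphi_2(a),y)\}$ for $x\in X_1,y\in X_2$. *)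

theory Defs
  imports Complex_Main
begin

definition linf_dist :: "real \<times> real \<Rightarrow> real \<times> real \<Rightarrow> real" where
  "linf_dist p q = max \<bar>fst p - fst q\<bar> \<bar>snd p - snd q\<bar>"

definition hyperconvex :: "'a set \<Rightarrow> ('a \<Rightarrow> 'a \<Rightarrow> real) \<Rightarrow> bool" where
  "hyperconvex S d \<longleftrightarrow>
     (\<forall>B :: ('a \<times> real) set. fst ` B \<subseteq> S \<longrightarrow>
        (\<forall>(x, r) \<in> B. \<forall>(y, s) \<in> B. d x y \<le> r + s) \<longrightarrow>
        (\<exists>z \<in> S. \<forall>(x, r) \<in> B. d x z \<le> r))"

definition glue_dist ::
  "('a \<Rightarrow> 'a \<Rightarrow> real) \<Rightarrow> ('b \<Rightarrow> 'b \<Rightarrow> real) \<Rightarrow> ('c \<Rightarrow> 'a) \<Rightarrow> ('c \<Rightarrow> 'b)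
    \<Rightarrow> 'a + 'b \<Rightarrow> 'a + 'b \<Rightarrow> real" where
  "glue_dist d1 d2 \<phi>1 \<phi>2 x y =
     (case (x, y) of
        (Inl p, Inl q) \<Rightarrow> d1 p q
      | (Inr p, Inr q) \<Rightarrow> d2 p q
      | (Inl p, Inr q) \<Rightarrow> (INF c. d1 p (\<phi>1 c) + d2 (\<phi>2 c) q)
      | (Inr p, Inl q) \<Rightarrow> (INF c. d1 q (\<phi>1 c) + d2 (\<phi>2 c) p))"

definition glue_rel :: "('c \<Rightarrow> 'a) \<Rightarrow> ('c \<Rightarrow> 'b) \<Rightarrow> 'a + 'b \<Rightarrow> 'a + 'b \<Rightarrow> bool" where
  "glue_rel \<phi>1 \<phi>2 x y \<longleftrightarrow> x = y \<or> (\<exists>c. x = Inl (\<phi>1 c) \<and> y = Inr (\<phi>2 c))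
                                    \<or> (\<exists>c. x = Inr (\<phi>2 c) \<and> y = Inl (\<phi>1 c))"

definition glue_space :: "'a set \<Rightarrow> 'b set \<Rightarrow> ('c \<Rightarrow> 'a) \<Rightarrow> ('c \<Rightarrow> 'b) \<Rightarrow> ('a + 'b) set set" where
  "glue_space X1 X2 \<phi>1 \<phi>2 =
     (\<lambda>x. {y \<in> Inl ` X1 \<union> Inr ` X2. glue_rel \<phi>1 \<phi>2 x y}) ` (Inl ` X1 \<union> Inr ` X2)"

definition glue_metric ::
  "('a \<Rightarrow> 'a \<Rightarrow> real) \<Rightarrow> ('b \<Rightarrow> 'b \<Rightarrow> real) \<Rightarrow> ('c \<Rightarrow> 'a) \<Rightarrow> ('c \<Rightarrow> 'b)
    \<Rightarrow> ('a + 'b) set \<Rightarrow> ('a + 'b) set \<Rightarrow> real" where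
  "glue_metric d1 d2 \<phi>1 \<phi>2 P Q = glue_dist d1 d2 \<phi>1 \<phi>2 (SOME x. x \<in> P) (SOME y. y \<in> Q)"

end

theory Submission
  imports Defs
begin


lemma linf_nonneg: "0 \<le> linf_dist p q" by (simp add: linf_dist_def)
lemma linf_sym: "linf_dist p q = linf_dist q p" by (simp add: linf_dist_def abs_minus_commute)
lemma linf_tri: "linf_dist p r \<le> linf_dist p q + linf_dist q r"
  unfolding linf_dist_def by (simp add: max_def abs_if split: if_splits; argo)

lemma glue_dist_sym: "glue_dist linf_dist linf_dist f g x y = glue_dist linf_dist linf_dist f g y x"
  by (cases x; cases y; simp add: glue_dist_def linf_sym)

lemma linf_line: "0 \<le> k \<Longrightarrow> k \<le> 1 \<Longrightarrow> linf_dist (c, k*c) (c', k*c') = \<bar>c - c'\<bar>"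
proof -
  assume "0 \<le> k" "k \<le> 1"
  have "\<bar>k*c - k*c'\<bar> = k * \<bar>c - c'\<bar>" using \<open>0\<le>k\<close> by (simp add: right_diff_distrib[symmetric] abs_mult)
  also have "\<dots> \<le> \<bar>c - c'\<bar>" using \<open>k\<le>1\<close> \<open>0\<le>k\<close> by (simp add: mult_left_le_one_le)
  finally show ?thesis by (simp add: linf_dist_def max_def)
qed

lemma inf_shift:
  fixes g :: "real \<Rightarrow> real"
  assumes "\<And>c'. g c \<le> g c' + \<bar>c' - c\<bar>"
  shows "(INF c'. g c' + \<bar>c' - c\<bar>) = g c"
proof (rule antisym)
  have "bdd_below (range (\<lambda>c'. g c' + \<bar>c' - c\<bar>))"
    using assms by (intro bdd_belowI[of _ "g c"]) auto
  then show "(INF c'. g c' + \<bar>c' - c\<bar>) \<le> g c"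
    using cINF_lower[of "(\<lambda>c'. g c' + \<bar>c' - c\<bar>)" UNIV c] by simp
  show "g c \<le> (INF c'. g c' + \<bar>c' - c\<bar>)"
    by (rule cINF_greatest) (auto simp: assms)
qed

lemma gd_swap:
  fixes a b :: real
  assumes "0 \<le> a" "a \<le> 1" "0 \<le> b" "b \<le> 1"
  shows "glue_dist linf_dist linf_dist (\<lambda>t::real. (t, a * t)) (\<lambda>t. (t, b * t)) (Inl (c, a*c)) y
       = glue_dist linf_dist linf_dist (\<lambda>t::real. (t, a * t)) (\<lambda>t. (t, b * t)) (Inr (c, b*c)) y"
proof (cases y)
  case (Inl q)
  have "(INF c'. linf_dist q (c', a*c') + linf_dist (c', b*c') (c, b*c))
      = (INF c'. linf_dist q (c', a*c') + \<bar>c' - c\<bar>)"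
    using linf_line[OF assms(3,4)] by simp
  also have "\<dots> = linf_dist q (c, a*c)"
  proof (rule inf_shift)
    fix c'
    show "linf_dist q (c, a*c) \<le> linf_dist q (c', a*c') + \<bar>c' - c\<bar>"
      using linf_tri[of q "(c, a*c)" "(c', a*c')"] linf_line[OF assms(1,2), of c' c] by simp
  qed
  finally show ?thesis using Inl by (simp add: glue_dist_def linf_sym)
next
  case (Inr q)
  have "(INF c'. linf_dist (c, a*c) (c', a*c') + linf_dist (c', b*c') q)
      = (INF c'. linf_dist (c', b*c') q + \<bar>c' - c\<bar>)"
    using linf_line[OF assms(1,2)] by (simp add: abs_minus_commute add.commute)
  also have "\<dots> = linf_dist (c, b*c) q"
  proof (rule inf_shift)
    fix c'
    show "linf_dist (c, b*c) q \<le> linf_dist (c', b*c') q + \<bar>c' - c\<bar>"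
      using linf_tri[of "(c, b*c)" q "(c', b*c')"] linf_line[OF assms(3,4), of c c']
        abs_minus_commute[of c c'] by linarith
  qed
  finally show ?thesis using Inr by (simp add: glue_dist_def linf_sym)
qed

lemma gd_rel:
  fixes a b :: real
  assumes "0 \<le> a" "a \<le> 1" "0 \<le> b" "b \<le> 1"
    and "glue_rel (\<lambda>t::real. (t, a * t)) (\<lambda>t. (t, b * t)) g x"
  shows "glue_dist linf_dist linf_dist (\<lambda>t::real. (t, a * t)) (\<lambda>t. (t, b * t)) x y
       = glue_dist linf_dist linf_dist (\<lambda>t::real. (t, a * t)) (\<lambda>t. (t, b * t)) g y"
  using assms(5) gd_swap[OF assms(1-4)] unfolding glue_rel_def by auto

lemma key:
  fixes a b :: real
  assumes "0 \<le> a" "a \<le> 1" "0 \<le> b" "b \<le> 1"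
    and "g \<in> Inl ` X1 \<union> Inr ` X2" "h \<in> Inl ` X1 \<union> Inr ` X2"
  shows "glue_metric linf_dist linf_dist (\<lambda>t::real. (t, a * t)) (\<lambda>t. (t, b * t))
           {y \<in> Inl ` X1 \<union> Inr ` X2. glue_rel (\<lambda>t::real. (t, a * t)) (\<lambda>t. (t, b * t)) g y}
           {y \<in> Inl ` X1 \<union> Inr ` X2. glue_rel (\<lambda>t::real. (t, a * t)) (\<lambda>t. (t, b * t)) h y}
       = glue_dist linf_dist linf_dist (\<lambda>t::real. (t, a * t)) (\<lambda>t. (t, b * t)) g h"
    (is "glue_metric _ _ ?f1 ?f2 ?G ?H = ?gd g h")
proof -
  have gG: "g \<in> ?G" using assms(5) by (simp add: glue_rel_def)
  have hH: "h \<in> ?H" using assms(6) by (simp add: glue_rel_def)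
  define x where "x = (SOME x. x \<in> ?G)"
  define y where "y = (SOME y. y \<in> ?H)"
  have x: "x \<in> ?G" unfolding x_def by (rule someI[of _ g]) (rule gG)
  have y: "y \<in> ?H" unfolding y_def by (rule someI[of _ h]) (rule hH)
  have "glue_metric linf_dist linf_dist ?f1 ?f2 ?G ?H = ?gd x y"
    by (simp add: glue_metric_def x_def y_def)
  also have "\<dots> = ?gd g y" using gd_rel[OF assms(1-4)] x by blast
  also have "\<dots> = ?gd y g" by (rule glue_dist_sym)
  also have "\<dots> = ?gd h g" using gd_rel[OF assms(1-4)] y by blast
  also have "\<dots> = ?gd g h" by (rule glue_dist_sym)
  finally show ?thesis .
qed

lemma gd_upper:
  "glue_dist linf_dist linf_dist f1 f2 (Inl p) (Inr q) \<le> linf_dist p (f1 c) + linf_dist (f2 c) q"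
proof -
  have "bdd_below (range (\<lambda>c. linf_dist p (f1 c) + linf_dist (f2 c) q))"
    by (intro bdd_belowI[of _ 0]) (auto intro: add_nonneg_nonneg linf_nonneg)
  then show ?thesis unfolding glue_dist_def using cINF_lower[of _ UNIV c] by simp
qed

lemma gd_lower:
  assumes "\<And>c. L \<le> linf_dist p (f1 c) + linf_dist (f2 c) q"
  shows "L \<le> glue_dist linf_dist linf_dist f1 f2 (Inl p) (Inr q)"
  using assms by (simp add: glue_dist_def cINF_greatest)

lemma lower_A:
  assumes "0 \<le> a" "a \<le> 1" "0 \<le> b" "b \<le> 1"
  shows "\<bar>fst q - fst u\<bar> \<le> linf_dist q (c, a*c) + linf_dist (c, b*c) u"
  unfolding linf_dist_def by (cases q; cases u) auto

lemma lower_B: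
  assumes "0 \<le> a" "a \<le> 1" "0 \<le> b" "b \<le> 1"
  shows "\<bar>b * fst q - snd u\<bar> \<le> linf_dist q (c, a*c) + linf_dist (c, b*c) u"
proof -
  obtain q1 q2 u1 u2 where qu: "q = (q1,q2)" "u = (u1,u2)" by (cases q; cases u) auto
  have "\<bar>b*q1 - b*c\<bar> = b * \<bar>q1 - c\<bar>" using assms by (simp add: right_diff_distrib[symmetric] abs_mult)
  also have "\<dots> \<le> \<bar>q1 - c\<bar>" using assms by (simp add: mult_left_le_one_le)
  finally have "\<bar>b*q1 - b*c\<bar> \<le> \<bar>q1 - c\<bar>" .
  then show ?thesis unfolding linf_dist_def qu by auto
qed

lemma lower_C:
  fixes a b c :: real
  assumes "0 \<le> a" "a \<le> b"
  shows "2 \<le> linf_dist (0,1) (c, a*c) + linf_dist (c, b*c) (1,-1)"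
proof (cases "c \<ge> 0")
  case True
  then have "a*c \<le> b*c" using assms by (simp add: mult_right_mono)
  then show ?thesis unfolding linf_dist_def by auto
next
  case False
  then have "a*c \<le> 0" using assms by (simp add: mult_nonneg_nonpos)
  then show ?thesis using False unfolding linf_dist_def by auto
qed


lemma not_hc:
  fixes a b :: real
  assumes "0 \<le> a" "a < b" "b \<le> 1"
  shows "\<not> hyperconvex
           (glue_space {p. snd p \<ge> a * fst p} {p. snd p \<le> b * fst p}
                       (\<lambda>t::real. (t, a * t)) (\<lambda>t. (t, b * t)))
           (glue_metric linf_dist linf_dist (\<lambda>t::real. (t, a * t)) (\<lambda>t. (t, b * t)))"
proof
  define X1 :: "(real \<times> real) set" where "X1 = {p. snd p \<ge> a * fst p}"
  define X2 :: "(real \<times> real) set" where "X2 = {p. snd p \<le> b * fst p}"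
  define D where "D = Inl ` X1 \<union> Inr ` X2"
  define cls where "cls g = {y \<in> Inl ` X1 \<union> Inr ` X2. glue_rel (\<lambda>t::real. (t, a * t)) (\<lambda>t. (t, b * t)) g y}" for g
  define M where "M = glue_metric linf_dist linf_dist (\<lambda>t::real. (t, a * t)) (\<lambda>t. (t, b * t))"
  define gd where "gd = glue_dist linf_dist linf_dist (\<lambda>t::real. (t, a * t)) (\<lambda>t. (t, b * t))"
  have ab: "0 \<le> a" "a \<le> 1" "0 \<le> b" "b \<le> 1" using assms by auto
  have K: "M (cls g) (cls h) = gd g h" if "g \<in> D" "h \<in> D" for g h
    unfolding M_def cls_def gd_def using key[OF ab] that unfolding D_def by blast
  have S: "glue_space X1 X2 (\<lambda>t::real. (t, a * t)) (\<lambda>t. (t, b * t)) = cls ` D"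
    by (simp add: glue_space_def cls_def D_def)
  assume "hyperconvex
           (glue_space {p. snd p \<ge> a * fst p} {p. snd p \<le> b * fst p}
                       (\<lambda>t::real. (t, a * t)) (\<lambda>t. (t, b * t)))
           (glue_metric linf_dist linf_dist (\<lambda>t::real. (t, a * t)) (\<lambda>t. (t, b * t)))"
  then have hc: "hyperconvex (cls ` D) M" using S unfolding X1_def X2_def M_def by simp
  define x1 :: "(real \<times> real) + (real \<times> real)" where "x1 = Inl (0,1)"
  define x2 :: "(real \<times> real) + (real \<times> real)" where "x2 = Inr (0,-2)"
  define x3 :: "(real \<times> real) + (real \<times> real)" where "x3 = Inr (2,0)"
  have xD: "x1 \<in> D" "x2 \<in> D" "x3 \<in> D" unfolding x1_def x2_def x3_def D_def X1_def X2_def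
    using assms by auto
  define B where "B = {(cls x1, 2 - (b - a)), (cls x2, 1), (cls x3, 1)}"
  have self: "gd x x = 0" for x unfolding gd_def glue_dist_def linf_dist_def
    by (cases x) auto
  have d12: "gd x1 x2 \<le> 3 - (b - a)"
  proof -
    have "gd x1 x2 \<le> linf_dist (0,1) (-1, a * -1) + linf_dist (-1, b * -1) (0,-2)"
      unfolding gd_def x1_def x2_def by (rule gd_upper)
    also have "\<dots> = 3 - (b - a)" using assms by (simp add: linf_dist_def max_def)
    finally show ?thesis .
  qed
  have d13: "gd x1 x3 \<le> 2"
  proof -
    have "gd x1 x3 \<le> linf_dist (0,1) (1, a * 1) + linf_dist (1, b * 1) (2,0)"
      unfolding gd_def x1_def x3_def by (rule gd_upper)
    also have "\<dots> = 2" using assms by (simp add: linf_dist_def max_def)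
    finally show ?thesis .
  qed
  have d23: "gd x2 x3 = 2" unfolding gd_def x2_def x3_def by (simp add: glue_dist_def linf_dist_def)
  have sym: "gd x y = gd y x" for x y unfolding gd_def by (rule glue_dist_sym)
  have "fst ` B \<subseteq> cls ` D" unfolding B_def using xD by auto
  moreover have "\<forall>(x, r) \<in> B. \<forall>(y, s) \<in> B. M x y \<le> r + s"
  proof -
    have m: "M (cls x) (cls y) = gd x y" if "x \<in> {x1,x2,x3}" "y \<in> {x1,x2,x3}" for x y
      using K xD that by blast
    have e: "gd x2 x1 \<le> 3 - (b - a)" "gd x3 x1 \<le> 2" "gd x3 x2 = 2"
      using d12 d13 d23 sym[of x1 x2] sym[of x1 x3] sym[of x2 x3] by auto
    show ?thesis unfolding B_def
      apply (simp only: ball_simps split_conv)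
      apply (simp only: m insert_iff simp_thms)
      using self d12 d13 d23 e assms by simp
  qed
  ultimately have "\<exists>z\<in>cls ` D. \<forall>(x, r) \<in> B. M x z \<le> r"
    using hc unfolding hyperconvex_def by (elim allE impE) assumption+
  then obtain z where z: "z \<in> cls ` D" "\<forall>(x, r) \<in> B. M x z \<le> r" by (elim bexE) simp
  then obtain g where g: "g \<in> D" "z = cls g" by auto
  have "M (cls x1) z \<le> 2 - (b - a)" using bspec[OF z(2), of "(cls x1, 2-(b-a))"] unfolding B_def by simp
  then have g1: "gd x1 g \<le> 2 - (b - a)" using K[OF xD(1) g(1)] g(2) by simp
  have "M (cls x2) z \<le> 1" using bspec[OF z(2), of "(cls x2, 1)"] unfolding B_def by simp
  then have g2: "gd x2 g \<le> 1" using K[OF xD(2) g(1)] g(2) by simp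
  have "M (cls x3) z \<le> 1" using bspec[OF z(2), of "(cls x3, 1)"] unfolding B_def by simp
  then have g3: "gd x3 g \<le> 1" using K[OF xD(3) g(1)] g(2) by simp
  show False
  proof (cases g)
    case (Inl q)
    have "\<bar>b * fst q - (-2)\<bar> \<le> gd g x2" unfolding gd_def Inl x2_def
      by (rule gd_lower) (use lower_B[OF ab, of q "(0,-2)"] in simp)
    moreover have "\<bar>fst q - 2\<bar> \<le> gd g x3" unfolding gd_def Inl x3_def
      by (rule gd_lower) (use lower_A[OF ab, of q "(2,0)"] in simp)
    ultimately have "b * fst q \<le> -1" "fst q \<ge> 1" using g2 g3 sym by auto
    moreover have "0 \<le> b * fst q" using assms \<open>fst q \<ge> 1\<close> by simp
    ultimately show False by simp
  next
    case (Inr q)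
    obtain q1 q2 where q: "q = (q1, q2)" by (cases q)
    have "linf_dist (0,-2) q \<le> 1" "linf_dist (2,0) q \<le> 1"
      using g2 g3 unfolding gd_def x2_def x3_def Inr by (auto simp: glue_dist_def)
    then have "q1 = 1" "q2 = -1" unfolding q linf_dist_def by auto
    then have "2 \<le> gd x1 g" unfolding gd_def x1_def Inr q
      by (intro gd_lower) (use lower_C[OF ab(1) less_imp_le[OF assms(2)]] in simp)
    then show False using g1 assms by simp
  qed
qed



lemma max_scale: "0 \<le> (t::real) \<Longrightarrow> max (t*x) (t*y) = t * max x y"
  by (cases "x \<le> y") (auto simp: max_def mult_left_mono mult_le_cancel_left)

lemma cross_eq:
  fixes a :: real
  assumes "0 \<le> a" "a \<le> 1" "snd p \<ge> a * fst p" "snd q \<le> a * fst q"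
  shows "glue_dist linf_dist linf_dist (\<lambda>t::real. (t, a * t)) (\<lambda>t. (t, a * t)) (Inl p) (Inr q)
       = linf_dist p q"
proof (rule antisym)
  obtain p1 p2 q1 q2 where pq: "p = (p1,p2)" "q = (q1,q2)" by (cases p; cases q)
  define \<alpha> where "\<alpha> = p2 - a*p1"
  define \<beta> where "\<beta> = a*q1 - q2"
  have ab: "\<alpha> \<ge> 0" "\<beta> \<ge> 0" using assms unfolding \<alpha>_def \<beta>_def pq by auto
  show "glue_dist linf_dist linf_dist (\<lambda>t::real. (t, a * t)) (\<lambda>t. (t, a * t)) (Inl p) (Inr q)
       \<le> linf_dist p q"
  proof (cases "\<alpha> + \<beta> = 0")
    case True
    then have "\<alpha> = 0" using ab by simp
    then have "p = (p1, a*p1)" unfolding pq \<alpha>_def by simp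
    then have "glue_dist linf_dist linf_dist (\<lambda>t::real. (t, a * t)) (\<lambda>t. (t, a * t)) (Inl p) (Inr q)
       \<le> linf_dist p (p1, a*p1) + linf_dist (p1, a*p1) q" by (intro gd_upper)
    also have "\<dots> = linf_dist p q" using \<open>p = (p1, a*p1)\<close> by (simp add: linf_dist_def)
    finally show ?thesis .
  next
    case False
    then have pos: "\<alpha> + \<beta> > 0" using ab by simp
    define t where "t = \<alpha> / (\<alpha> + \<beta>)"
    have t01: "0 \<le> t" "t \<le> 1" "0 \<le> 1 - t" using ab pos unfolding t_def by (auto simp: field_simps)
    define c where "c = p1 + t * (q1 - p1)"
    have tab: "t * (\<alpha> + \<beta>) = \<alpha>" unfolding t_def using pos by simp
    have ac: "a * c = p2 + t * (q2 - p2)"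
      using tab unfolding c_def \<alpha>_def \<beta>_def by (simp add: algebra_simps)
    have x1: "\<bar>p1 - c\<bar> = t * \<bar>p1 - q1\<bar>"
    proof -
      have "p1 - c = t * (p1 - q1)" unfolding c_def by (simp add: algebra_simps)
      then show ?thesis using t01 by (simp add: abs_mult)
    qed
    have x2: "\<bar>p2 - a*c\<bar> = t * \<bar>p2 - q2\<bar>"
    proof -
      have "p2 - a*c = t * (p2 - q2)" unfolding ac by (simp add: algebra_simps)
      then show ?thesis using t01 by (simp add: abs_mult)
    qed
    have y1: "\<bar>c - q1\<bar> = (1 - t) * \<bar>p1 - q1\<bar>"
    proof -
      have "c - q1 = (1 - t) * (p1 - q1)" unfolding c_def by (simp add: algebra_simps)
      then show ?thesis using t01 by (simp add: abs_mult)
    qed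
    have y2: "\<bar>a*c - q2\<bar> = (1 - t) * \<bar>p2 - q2\<bar>"
    proof -
      have "a*c - q2 = (1 - t) * (p2 - q2)" unfolding ac by (simp add: algebra_simps)
      then show ?thesis using t01 by (simp add: abs_mult)
    qed
    have e1: "linf_dist p (c, a*c) = t * linf_dist p q"
      unfolding pq linf_dist_def using t01 x1 x2 by (simp add: max_scale)
    have e2: "linf_dist (c, a*c) q = (1 - t) * linf_dist p q"
      unfolding pq linf_dist_def using t01 y1 y2 by (simp add: max_scale)
    have "glue_dist linf_dist linf_dist (\<lambda>t::real. (t, a * t)) (\<lambda>t. (t, a * t)) (Inl p) (Inr q)
       \<le> linf_dist p (c, a*c) + linf_dist (c, a*c) q" by (intro gd_upper)
    also have "\<dots> = linf_dist p q" using e1 e2 by (simp add: algebra_simps)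
    finally show ?thesis .
  qed
next
  show "linf_dist p q \<le> glue_dist linf_dist linf_dist (\<lambda>t::real. (t, a * t)) (\<lambda>t. (t, a * t)) (Inl p) (Inr q)"
    by (rule gd_lower) (rule linf_tri)
qed

lemma linf_fst: "\<bar>fst x - fst y\<bar> \<le> linf_dist x y" by (simp add: linf_dist_def)
lemma linf_snd: "\<bar>snd x - snd y\<bar> \<le> linf_dist x y" by (simp add: linf_dist_def)

lemma hc_eq:
  fixes a :: real
  assumes "0 \<le> a" "a \<le> 1"
  shows "hyperconvex
           (glue_space {p. snd p \<ge> a * fst p} {p. snd p \<le> a * fst p}
                       (\<lambda>t::real. (t, a * t)) (\<lambda>t. (t, a * t)))
           (glue_metric linf_dist linf_dist (\<lambda>t::real. (t, a * t)) (\<lambda>t. (t, a * t)))"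
proof -
  define X1 :: "(real \<times> real) set" where "X1 = {p. snd p \<ge> a * fst p}"
  define X2 :: "(real \<times> real) set" where "X2 = {p. snd p \<le> a * fst p}"
  define D where "D = Inl ` X1 \<union> Inr ` X2"
  define cls where "cls g = {y \<in> Inl ` X1 \<union> Inr ` X2. glue_rel (\<lambda>t::real. (t, a * t)) (\<lambda>t. (t, a * t)) g y}" for g
  define M where "M = glue_metric linf_dist linf_dist (\<lambda>t::real. (t, a * t)) (\<lambda>t. (t, a * t))"
  define gd where "gd = glue_dist linf_dist linf_dist (\<lambda>t::real. (t, a * t)) (\<lambda>t. (t, a * t))"
  define F :: "(real \<times> real) + (real \<times> real) \<Rightarrow> real \<times> real" where "F = case_sum id id"
  have K: "M (cls g) (cls h) = gd g h" if "g \<in> D" "h \<in> D" for g h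
    unfolding M_def cls_def gd_def using key[OF assms assms] that unfolding D_def by blast
  have S: "glue_space X1 X2 (\<lambda>t::real. (t, a * t)) (\<lambda>t. (t, a * t)) = cls ` D"
    by (simp add: glue_space_def cls_def D_def)
  have gdF: "gd g h = linf_dist (F g) (F h)" if gD: "g \<in> D" and hD: "h \<in> D" for g h
  proof -
    consider (ll) p q where "g = Inl p" "h = Inl q" | (rr) p q where "g = Inr p" "h = Inr q"
      | (lr) p q where "g = Inl p" "h = Inr q" "p \<in> X1" "q \<in> X2"
      | (rl) p q where "g = Inr p" "h = Inl q" "p \<in> X2" "q \<in> X1"
      using gD hD unfolding D_def by blast
    then show ?thesis
    proof cases
      case ll then show ?thesis by (simp add: gd_def F_def glue_dist_def)
    next
      case rr then show ?thesis by (simp add: gd_def F_def glue_dist_def)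
    next
      case lr then show ?thesis unfolding gd_def F_def
        using cross_eq[OF assms, of p q] by (simp add: X1_def X2_def)
    next
      case rl then show ?thesis unfolding gd_def F_def
        apply (subst glue_dist_sym)
        using cross_eq[OF assms, of q p] linf_sym[of q p]
        by (simp add: X1_def X2_def)
    qed
  qed
  have "hyperconvex (cls ` D) M"
    unfolding hyperconvex_def
  proof (intro allI impI)
    fix B :: "(((real \<times> real) + (real \<times> real)) set \<times> real) set"
    assume fB: "fst ` B \<subseteq> cls ` D"
      and pw: "\<forall>(x, r) \<in> B. \<forall>(y, s) \<in> B. M x y \<le> r + s"
    define rep where "rep P = (SOME g. g \<in> D \<and> P = cls g)" for P
    have rep: "rep P \<in> D \<and> P = cls (rep P)" if "P \<in> cls ` D" for P
      unfolding rep_def by (rule someI_ex) (use that in blast)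
    define G where "G P = F (rep P)" for P
    have MG: "M P Q = linf_dist (G P) (G Q)" if "P \<in> cls ` D" "Q \<in> cls ` D" for P Q
    proof -
      have r1: "rep P \<in> D" "P = cls (rep P)" using rep[OF that(1)] by auto
      have r2: "rep Q \<in> D" "Q = cls (rep Q)" using rep[OF that(2)] by auto
      have "M P Q = M (cls (rep P)) (cls (rep Q))" by (rule arg_cong2[where f=M]) (rule r1(2), rule r2(2))
      also have "\<dots> = gd (rep P) (rep Q)" by (rule K[OF r1(1) r2(1)])
      also have "\<dots> = linf_dist (G P) (G Q)" unfolding G_def by (rule gdF[OF r1(1) r2(1)])
      finally show ?thesis .
    qed
    have pwG: "linf_dist (G P) (G Q) \<le> r + s" if "(P, r) \<in> B" "(Q, s) \<in> B" for P Q r s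
    proof -
      have "P \<in> fst ` B" "Q \<in> fst ` B" using that by (metis fst_conv image_eqI)+
      then have PQ: "P \<in> cls ` D" "Q \<in> cls ` D" using fB by (meson subsetD)+
      have "M P Q \<le> r + s" using pw that by blast
      then show ?thesis using MG[OF PQ] by simp
    qed
    define z1 where "z1 = Sup ((\<lambda>(P, r). fst (G P) - r) ` B)"
    define z2 where "z2 = Sup ((\<lambda>(P, r). snd (G P) - r) ` B)"
    have bnd: "linf_dist (G P) (z1, z2) \<le> r" if "(P, r) \<in> B" for P r
    proof -
      have ne1: "(\<lambda>(P, r). fst (G P) - r) ` B \<noteq> {}" and ne2: "(\<lambda>(P, r). snd (G P) - r) ` B \<noteq> {}"
        using that by auto
      have ub1: "\<And>w. w \<in> (\<lambda>(P, r). fst (G P) - r) ` B \<Longrightarrow> w \<le> fst (G P) + r"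
      proof -
        fix w assume "w \<in> (\<lambda>(P, r). fst (G P) - r) ` B"
        then obtain Q s where Qs: "(Q, s) \<in> B" "w = fst (G Q) - s" by auto
        have "\<bar>fst (G Q) - fst (G P)\<bar> \<le> s + r" using pwG[OF Qs(1) that] linf_fst[of "G Q" "G P"] by linarith
        then show "w \<le> fst (G P) + r" using Qs by linarith
      qed
      have ub2: "\<And>w. w \<in> (\<lambda>(P, r). snd (G P) - r) ` B \<Longrightarrow> w \<le> snd (G P) + r"
      proof -
        fix w assume "w \<in> (\<lambda>(P, r). snd (G P) - r) ` B"
        then obtain Q s where Qs: "(Q, s) \<in> B" "w = snd (G Q) - s" by auto
        have "\<bar>snd (G Q) - snd (G P)\<bar> \<le> s + r" using pwG[OF Qs(1) that] linf_snd[of "G Q" "G P"] by linarith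
        then show "w \<le> snd (G P) + r" using Qs by linarith
      qed
      have "fst (G P) - r \<le> z1" unfolding z1_def
        by (rule cSup_upper) (use that ub1 in \<open>force intro: bdd_aboveI\<close>)+
      moreover have "z1 \<le> fst (G P) + r" unfolding z1_def
        by (rule cSup_least[OF ne1 ub1])
      moreover have "snd (G P) - r \<le> z2" unfolding z2_def
        by (rule cSup_upper) (use that ub2 in \<open>force intro: bdd_aboveI\<close>)+
      moreover have "z2 \<le> snd (G P) + r" unfolding z2_def
        by (rule cSup_least[OF ne2 ub2])
      ultimately show ?thesis by (simp add: linf_dist_def abs_le_iff)
    qed
    define zg where "zg = (if a * z1 \<le> z2 then Inl (z1, z2) else Inr (z1, z2))"
    have zgD: "zg \<in> D" unfolding zg_def D_def X1_def X2_def by auto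
    have Fzg: "F zg = (z1, z2)" unfolding zg_def F_def by auto
    show "\<exists>z\<in>cls ` D. \<forall>(x, r) \<in> B. M x z \<le> r"
    proof (intro bexI[of _ "cls zg"] ballI)
      show "cls zg \<in> cls ` D" using zgD by blast
      fix xr assume xr: "xr \<in> B"
      obtain P r where Pr: "xr = (P, r)" by (cases xr)
      have "P \<in> fst ` B" using xr Pr by (metis fst_conv image_eqI)
      then have P: "P \<in> cls ` D" using fB by (meson subsetD)
      have r1: "rep P \<in> D" "P = cls (rep P)" using rep[OF P] by auto
      have "M P (cls zg) = M (cls (rep P)) (cls zg)" by (rule arg_cong2[where f=M]) (rule r1(2), rule refl)
      also have "\<dots> = gd (rep P) zg" by (rule K[OF r1(1) zgD])
      also have "\<dots> = linf_dist (G P) (z1, z2)" unfolding G_def Fzg[symmetric] by (rule gdF[OF r1(1) zgD])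
      finally have "M P (cls zg) = linf_dist (G P) (z1, z2)" .
      then show "case xr of (x, r) \<Rightarrow> M x (cls zg) \<le> r" using bnd xr Pr by simp
    qed
  qed
  then show ?thesis using S unfolding X1_def X2_def M_def by simp
qed


theorem mainTheorem17:
  fixes a b :: real
  assumes "0 \<le> a" and "a \<le> b" and "b \<le> 1"
  shows "hyperconvex
           (glue_space {p. snd p \<ge> a * fst p} {p. snd p \<le> b * fst p}
                       (\<lambda>t::real. (t, a * t)) (\<lambda>t. (t, b * t)))
           (glue_metric linf_dist linf_dist (\<lambda>t::real. (t, a * t)) (\<lambda>t. (t, b * t)))
         \<longleftrightarrow> a = b"
proof
  assume h: "hyperconvex
           (glue_space {p. snd p \<ge> a * fst p} {p. snd p \<le> b * fst p}
                       (\<lambda>t::real. (t, a * t)) (\<lambda>t. (t, b * t)))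
           (glue_metric linf_dist linf_dist (\<lambda>t::real. (t, a * t)) (\<lambda>t. (t, b * t)))"
  show "a = b"
  proof (rule ccontr)
    assume "a \<noteq> b"
    then have "a < b" using assms by simp
    then show False using not_hc[OF assms(1) _ assms(3)] h by blast
  qed
next
  assume "a = b"
  then show "hyperconvex
           (glue_space {p. snd p \<ge> a * fst p} {p. snd p \<le> b * fst p}
                       (\<lambda>t::real. (t, a * t)) (\<lambda>t. (t, b * t)))
           (glue_metric linf_dist linf_dist (\<lambda>t::real. (t, a * t)) (\<lambda>t. (t, b * t)))"
    using hc_eq[OF assms(1)] assms by simp
qed

end
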